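(* Let $(E,\mathscr{T},\le)$ be a completely regularly ordered space, let $\beta:E\to(\beta E,\mathscr{T}_\beta,\le_\beta)$ be the Stone–Čech compactification endowed with the preorder $G(\le_\beta)=\bigcap_{f\in\mathcal{F}}G_{\tilde f}$ ($\mathcal{F}$ the family of continuous isotone functions $f:E\to[0,1]$, $\tilde f$ the unique continuous extension of $f\circ\beta^{-1}$ to $\beta E$), and let $\Pi:\beta E\to\beta E/\!\sim_\beta$ be the quotient projection onto the $T_2$-ordered space $(\beta E/\!\sim_\beta,\mathscr{T}_\beta/\!\sim_\beta,\lesssim_\beta)$. Then $\Pi\circ\beta:E\to\beta E/\!\sim_\beta$ is a $T_2$-order compactification equivalent to the Nachbin $T_2$-order compactification $n:E\to nE$.
   Context: A topological ordered space $(E,\mathscr{T},\le)$ is completely regularly ordered if $\le$ is an order, $\mathscr{T}$ is the initial topology of the continuous isotone functions $E\to[0,1]$, and $x\le y$ iff $f(x)\le f(y)$ for all such functions. Isotone: $x\le y\Rightarrow f(x)\le f(y)$; $G_f=\{(x,y):f(x)\le f(y)\}$. $x\sim_\beta y$ means $x\le_\beta y$ and $y\le_\beta x$; the quotient carries the quotient topology and the order $[x]\lesssim_\beta[y]$ iff $x\le_\beta y$. $T_2$-ordered: order with closed graph. A $T_2$-order compactification of $E$ is a map $c:E\to cE$ into a compact Hausdorff $T_2$-ordered space, which is a homeomorphism onto its dense image and is isotone with isotone inverse on the image. $c_1\le c_2$ means there is a continuous isotone $C:c_2E\to c_1E$ with $C\circ c_2=c_1$; equivalent: both directions. The Nachbin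 $T_2$-order compactification is the (unique up to equivalence) $T_2$-order compactification $n:E\to nE$ to which every continuous isotone function $E\to[0,1]$ extends as a continuous isotone function. *)

theory Defs
  imports "HOL-Analysis.Analysis"
begin

definition cont_isotone_01 :: "'a topology \<Rightarrow> ('a \<Rightarrow> 'a \<Rightarrow> bool) \<Rightarrow> ('a \<Rightarrow> real) set" where
  "cont_isotone_01 X le = {f. continuous_map X (top_of_set {0..1}) f \<and>
       (\<forall>x\<in>topspace X. \<forall>y\<in>topspace X. le x y \<longrightarrow> f x \<le> f y)}"

definition order_on :: "'a set \<Rightarrow> ('a \<Rightarrow> 'a \<Rightarrow> bool) \<Rightarrow> bool" where
  "order_on S le \<longleftrightarrow> (\<forall>x\<in>S. le x x) \<and>
     (\<forall>x\<in>S. \<forall>y\<in>S. le x y \<and> le y x \<longrightarrow> x = y) \<and>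
     (\<forall>x\<in>S. \<forall>y\<in>S. \<forall>z\<in>S. le x y \<and> le y z \<longrightarrow> le x z)"

definition completely_regularly_ordered :: "'a topology \<Rightarrow> ('a \<Rightarrow> 'a \<Rightarrow> bool) \<Rightarrow> bool" where
  "completely_regularly_ordered X le \<longleftrightarrow>
     order_on (topspace X) le \<and>
     X = topology_generated_by
           {{x \<in> topspace X. f x \<in> U} | f U. f \<in> cont_isotone_01 X le \<and> open U} \<and>
     (\<forall>x\<in>topspace X. \<forall>y\<in>topspace X.
        le x y \<longleftrightarrow> (\<forall>f\<in>cont_isotone_01 X le. f x \<le> f y))"

definition T2_ordered :: "'a topology \<Rightarrow> ('a \<Rightarrow> 'a \<Rightarrow> bool) \<Rightarrow> bool" where
  "T2_ordered Y le \<longleftrightarrow> order_on (topspace Y) le \<and>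
     closedin (prod_topology Y Y) {(x, y). x \<in> topspace Y \<and> y \<in> topspace Y \<and> le x y}"

definition T2_order_compactification ::
  "'a topology \<Rightarrow> ('a \<Rightarrow> 'a \<Rightarrow> bool) \<Rightarrow> ('a \<Rightarrow> 'c) \<Rightarrow> 'c topology \<Rightarrow> ('c \<Rightarrow> 'c \<Rightarrow> bool) \<Rightarrow> bool" where
  "T2_order_compactification X le c Y leY \<longleftrightarrow>
     compact_space Y \<and> Hausdorff_space Y \<and> T2_ordered Y leY \<and>
     embedding_map X Y c \<and>
     Y closure_of (c ` topspace X) = topspace Y \<and>
     (\<forall>x\<in>topspace X. \<forall>y\<in>topspace X. le x y \<longleftrightarrow> leY (c x) (c y))"

definition compactification_le ::
  "'a topology \<Rightarrow> ('a \<Rightarrow> 'c) \<Rightarrow> 'c topology \<Rightarrow> ('c \<Rightarrow> 'c \<Rightarrow> bool)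
   \<Rightarrow> ('a \<Rightarrow> 'd) \<Rightarrow> 'd topology \<Rightarrow> ('d \<Rightarrow> 'd \<Rightarrow> bool) \<Rightarrow> bool" where
  "compactification_le X c1 Y1 le1 c2 Y2 le2 \<longleftrightarrow>
     (\<exists>C. continuous_map Y2 Y1 C \<and>
          (\<forall>u\<in>topspace Y2. \<forall>v\<in>topspace Y2. le2 u v \<longrightarrow> le1 (C u) (C v)) \<and>
          (\<forall>x\<in>topspace X. C (c2 x) = c1 x))"

definition compactification_equiv ::
  "'a topology \<Rightarrow> ('a \<Rightarrow> 'c) \<Rightarrow> 'c topology \<Rightarrow> ('c \<Rightarrow> 'c \<Rightarrow> bool)
   \<Rightarrow> ('a \<Rightarrow> 'd) \<Rightarrow> 'd topology \<Rightarrow> ('d \<Rightarrow> 'd \<Rightarrow> bool) \<Rightarrow> bool" where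
  "compactification_equiv X c1 Y1 le1 c2 Y2 le2 \<longleftrightarrow>
     compactification_le X c1 Y1 le1 c2 Y2 le2 \<and> compactification_le X c2 Y2 le2 c1 Y1 le1"

definition Nachbin_compactification ::
  "'a topology \<Rightarrow> ('a \<Rightarrow> 'a \<Rightarrow> bool) \<Rightarrow> ('a \<Rightarrow> 'c) \<Rightarrow> 'c topology \<Rightarrow> ('c \<Rightarrow> 'c \<Rightarrow> bool) \<Rightarrow> bool" where
  "Nachbin_compactification X le n Y leY \<longleftrightarrow>
     T2_order_compactification X le n Y leY \<and>
     (\<forall>f\<in>cont_isotone_01 X le. \<exists>g\<in>cont_isotone_01 Y leY. \<forall>x\<in>topspace X. g (n x) = f x)"

definition Stone_Cech_compactification :: "'a topology \<Rightarrow> ('a \<Rightarrow> 'b) \<Rightarrow> 'b topology \<Rightarrow> bool" where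
  "Stone_Cech_compactification X bt B \<longleftrightarrow>
     compact_space B \<and> Hausdorff_space B \<and> embedding_map X B bt \<and>
     B closure_of (bt ` topspace X) = topspace B \<and>
     (\<forall>f::'a \<Rightarrow> real. continuous_map X (top_of_set {0..1}) f \<longrightarrow>
        (\<exists>g. continuous_map B (top_of_set {0..1::real}) g \<and> (\<forall>x\<in>topspace X. g (bt x) = f x)))"

text \<open>The preorder on \<beta>E: x \<le>_beta y iff f~ x \<le> f~ y for every continuous isotone f, where
  f~ is the (unique, by density and Hausdorffness) continuous extension of f \<circ> \<beta>\<inverse>.\<close>
definition beta_le :: "'a topology \<Rightarrow> ('a \<Rightarrow> 'a \<Rightarrow> bool) \<Rightarrow> ('a \<Rightarrow> 'b) \<Rightarrow> 'b topology \<Rightarrow> 'b \<Rightarrow> 'b \<Rightarrow> bool" where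
  "beta_le X le bt B x y \<longleftrightarrow> x \<in> topspace B \<and> y \<in> topspace B \<and>
     (\<forall>f\<in>cont_isotone_01 X le. \<forall>g. continuous_map B (top_of_set {0..1::real}) g \<and>
          (\<forall>e\<in>topspace X. g (bt e) = f e) \<longrightarrow> g x \<le> g y)"

definition beta_class :: "'a topology \<Rightarrow> ('a \<Rightarrow> 'a \<Rightarrow> bool) \<Rightarrow> ('a \<Rightarrow> 'b) \<Rightarrow> 'b topology \<Rightarrow> 'b \<Rightarrow> 'b set" where
  "beta_class X le bt B x = {y \<in> topspace B. beta_le X le bt B x y \<and> beta_le X le bt B y x}"

definition quotient_topology :: "'a topology \<Rightarrow> ('a \<Rightarrow> 'b) \<Rightarrow> 'b topology" where
  "quotient_topology X p = topology (\<lambda>U. U \<subseteq> p ` topspace X \<and> openin X {x \<in> topspace X. p x \<in> U})"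

definition beta_quot_le :: "'a topology \<Rightarrow> ('a \<Rightarrow> 'a \<Rightarrow> bool) \<Rightarrow> ('a \<Rightarrow> 'b) \<Rightarrow> 'b topology \<Rightarrow> 'b set \<Rightarrow> 'b set \<Rightarrow> bool" where
  "beta_quot_le X le bt B P Q \<longleftrightarrow>
     (\<exists>x\<in>topspace B. \<exists>y\<in>topspace B. P = beta_class X le bt B x \<and> Q = beta_class X le bt B y \<and>
        beta_le X le bt B x y)"

end

theory Submission
  imports Defs
begin


definition dn :: "'a topology \<Rightarrow> ('a \<Rightarrow> 'a \<Rightarrow> bool) \<Rightarrow> 'a set \<Rightarrow> 'a set" where
  "dn N le S = {x\<in>topspace N. \<exists>y\<in>S. le x y}"
definition upc :: "'a topology \<Rightarrow> ('a \<Rightarrow> 'a \<Rightarrow> bool) \<Rightarrow> 'a set \<Rightarrow> 'a set" where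
  "upc N le S = {x\<in>topspace N. \<exists>y\<in>S. le y x}"
definition decr :: "'a topology \<Rightarrow> ('a \<Rightarrow> 'a \<Rightarrow> bool) \<Rightarrow> 'a set \<Rightarrow> bool" where
  "decr N le S \<longleftrightarrow> S \<subseteq> topspace N \<and> (\<forall>x\<in>topspace N. \<forall>y\<in>S. le x y \<longrightarrow> x \<in> S)"

lemma closed_dn_upc:
  assumes "compact_space N" "Hausdorff_space N" "T2_ordered N le" "closedin N C"
  shows "closedin N (dn N le C) \<and> closedin N (upc N le C)"
proof -
  define G where "G = {(x, y). x \<in> topspace N \<and> y \<in> topspace N \<and> le x y}"
  have G: "closedin (prod_topology N N) G" using assms(3) by (simp add: T2_ordered_def G_def)
  have c1: "closedin (prod_topology N N) (G \<inter> (topspace N \<times> C))"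
    using G assms(4) by (simp add: closedin_Int closedin_prod_Times_iff)
  have c2: "closedin (prod_topology N N) (G \<inter> (C \<times> topspace N))"
    using G assms(4) by (simp add: closedin_Int closedin_prod_Times_iff)
  have cp: "compact_space (prod_topology N N)"
    using assms(1) by (simp add: compact_space_prod_topology)
  have "compactin N (fst ` (G \<inter> (topspace N \<times> C)))"
    by (rule image_compactin[OF closedin_compact_space[OF cp c1] continuous_map_fst])
  moreover have "fst ` (G \<inter> (topspace N \<times> C)) = dn N le C"
    using closedin_subset[OF assms(4)] unfolding G_def dn_def by force
  moreover have "compactin N (snd ` (G \<inter> (C \<times> topspace N)))"
    by (rule image_compactin[OF closedin_compact_space[OF cp c2] continuous_map_snd])
  moreover have "snd ` (G \<inter> (C \<times> topspace N)) = upc N le C"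
    using closedin_subset[OF assms(4)] unfolding G_def upc_def by force
  ultimately show ?thesis using compactin_imp_closedin assms(2) by metis
qed

lemma mono_sep_step:
  assumes "compact_space N" "Hausdorff_space N" "T2_ordered N le"
    and "closedin N A" "decr N le A" "openin N V" "decr N le V" "A \<subseteq> V"
  shows "\<exists>W. openin N W \<and> decr N le W \<and> A \<subseteq> W \<and> dn N le (N closure_of W) \<subseteq> V"
proof -
  have ord: "order_on (topspace N) le" using assms(3) by (simp add: T2_ordered_def)
  have nor: "normal_space N" using assms(1,2) compact_Hausdorff_or_regular_imp_normal_space by blast
  define B where "B = topspace N - V"
  have cB: "closedin N B" using assms(6) by (simp add: B_def closedin_diff)
  have dAB: "disjnt A B" using assms(8) by (auto simp: B_def disjnt_def)
  obtain U0 V0 where U0: "openin N U0" "openin N V0" "A \<subseteq> U0" "B \<subseteq> V0" "disjnt U0 V0"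
  proof -
    have "\<exists>U V. openin N U \<and> openin N V \<and> A \<subseteq> U \<and> B \<subseteq> V \<and> disjnt U V"
      using nor cB assms(4) dAB unfolding normal_space_def by simp
    then show thesis using that by blast
  qed
  define W where "W = topspace N - upc N le (topspace N - U0)"
  have cU: "closedin N (upc N le (topspace N - U0))"
    using closed_dn_upc[OF assms(1-3)] U0(1) by blast
  have oW: "openin N W" unfolding W_def using cU by blast
  have trans: "\<And>x y z. x \<in> topspace N \<Longrightarrow> y \<in> topspace N \<Longrightarrow> z \<in> topspace N \<Longrightarrow> le x y \<Longrightarrow> le y z \<Longrightarrow> le x z"
    and refl: "\<And>x. x \<in> topspace N \<Longrightarrow> le x x"
    using ord unfolding order_on_def by blast+
  have dW: "decr N le W"
    unfolding decr_def
  proof (intro conjI ballI impI)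
    show "W \<subseteq> topspace N" by (auto simp: W_def)
    fix x y assume xy: "x \<in> topspace N" "y \<in> W" "le x y"
    show "x \<in> W"
    proof (rule ccontr)
      assume "x \<notin> W"
      then obtain z where "z \<in> topspace N - U0" "le z x" using xy(1) by (auto simp: W_def upc_def)
      then have "y \<in> upc N le (topspace N - U0)" using xy trans[of z x y] by (auto simp: W_def upc_def)
      then show False using xy(2) by (auto simp: W_def)
    qed
  qed
  have AW: "A \<subseteq> W"
  proof
    fix a assume a: "a \<in> A"
    have at: "a \<in> topspace N" using a closedin_subset[OF assms(4)] by blast
    show "a \<in> W"
    proof (rule ccontr)
      assume "a \<notin> W"
      then obtain z where "z \<in> topspace N - U0" "le z a" using at by (auto simp: W_def upc_def)
      then have "z \<in> A" using assms(5) a unfolding decr_def by blast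
      then show False using U0(3) \<open>z \<in> topspace N - U0\<close> by blast
    qed
  qed
  have WU: "W \<subseteq> U0"
    using refl unfolding W_def upc_def by blast
  have "disjnt W V0" using WU U0(5) by (auto simp: disjnt_def)
  have clW: "N closure_of W \<subseteq> topspace N - V0"
  proof (rule closure_of_minimal)
    show "W \<subseteq> topspace N - V0" using \<open>disjnt W V0\<close> openin_subset[OF oW] by (auto simp: disjnt_def)
    show "closedin N (topspace N - V0)" using U0(2) by blast
  qed
  have "dn N le (N closure_of W) \<subseteq> V"
  proof
    fix x assume "x \<in> dn N le (N closure_of W)"
    then obtain y where y: "x \<in> topspace N" "y \<in> N closure_of W" "le x y" by (auto simp: dn_def)
    show "x \<in> V"
    proof (rule ccontr)
      assume "x \<notin> V"
      then have "y \<in> V \<Longrightarrow> False" using assms(7) y unfolding decr_def by blast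
      then have "y \<in> B" using y(2) closure_of_subset_topspace[of N W] by (auto simp: B_def)
      then show False using clW U0(4) y(2) by blast
    qed
  qed
  then show ?thesis using oW dW AW by blast
qed

lemma ordered_Urysohn:
  assumes cN: "compact_space N" and hN: "Hausdorff_space N" and oN: "T2_ordered N le"
    and p: "p \<in> topspace N" and q: "q \<in> topspace N" and npq: "\<not> le p q"
  shows "\<exists>f\<in>cont_isotone_01 N le. f q = 0 \<and> f p = 1"
proof -
  let ?X = N
  have ord: "order_on (topspace N) le" using oN by (simp add: T2_ordered_def)
  have trans: "\<And>x y z. x \<in> topspace N \<Longrightarrow> y \<in> topspace N \<Longrightarrow> z \<in> topspace N \<Longrightarrow> le x y \<Longrightarrow> le y z \<Longrightarrow> le x z"
    and refl: "\<And>x. x \<in> topspace N \<Longrightarrow> le x x"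
    using ord unfolding order_on_def by blast+
  define S where "S = dn N le {q}"
  define T where "T = upc N le {p}"
  have cq: "closedin N {q}" and cp: "closedin N {p}"
    using hN p q by (simp_all add: Hausdorff_imp_t1_space closedin_t1_singleton)
  have cS: "closedin N S" and cT: "closedin N T"
    using closed_dn_upc[OF cN hN oN] cq cp by (auto simp: S_def T_def)
  have dS: "decr N le S"
    unfolding decr_def S_def dn_def using trans q by blast
  have STd: "S \<subseteq> topspace N - T"
  proof
    fix x assume "x \<in> S"
    then have x: "x \<in> topspace N" "le x q" by (auto simp: S_def dn_def)
    show "x \<in> topspace N - T"
    proof
      show "x \<notin> T"
      proof
        assume "x \<in> T" then have "le p x" by (auto simp: T_def upc_def)
        then show False using trans[OF p x(1) q] x npq by blast
      qed
    qed (rule x(1))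
  qed
  have dV: "decr N le (topspace N - T)"
    unfolding decr_def
  proof (intro conjI ballI impI)
    fix x y assume xy: "x \<in> topspace N" "y \<in> topspace N - T" "le x y"
    show "x \<in> topspace N - T"
    proof (rule ccontr)
      assume "x \<notin> topspace N - T"
      then have "le p x" using xy(1) by (auto simp: T_def upc_def)
      then have "le p y" using trans[OF p xy(1)] xy by blast
      then show False using xy(2) by (auto simp: T_def upc_def)
    qed
  qed auto
  have oV: "openin N (topspace N - T)" using cT by blast
  define R where "R = (\<lambda>x y. openin N x \<and> decr N le x \<and> openin N y \<and> decr N le y \<and> dn N le (N closure_of x) \<subseteq> y)"
  have dn_sub: "Y \<subseteq> dn N le Y" if "Y \<subseteq> topspace N" for Y
    using that refl by (auto simp: dn_def)
  have dn_closed: "closedin N (dn N le (N closure_of Y))" for Y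
    by (simp add: closed_dn_upc[OF cN hN oN closedin_closure_of])
  have dn_decr: "decr N le (dn N le Y)" if Yt: "Y \<subseteq> topspace N" for Y
    unfolding decr_def
  proof (intro conjI ballI impI)
    fix x y assume xy: "x \<in> topspace N" "y \<in> dn N le Y" "le x y"
    then obtain z where "z \<in> Y" "le y z" "y \<in> topspace N" by (auto simp: dn_def)
    have "z \<in> topspace N" using Yt \<open>z \<in> Y\<close> by blast
    show "x \<in> dn N le Y" using trans[OF xy(1) \<open>y \<in> topspace N\<close> \<open>z \<in> topspace N\<close> xy(3) \<open>le y z\<close>] \<open>z \<in> Y\<close> xy(1) by (auto simp: dn_def)
  qed (auto simp: dn_def)
  obtain U where U: "openin N U" "decr N le U" "S \<subseteq> U" "dn N le (N closure_of U) \<subseteq> topspace N - T"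
    using mono_sep_step[OF cN hN oN cS dS oV dV STd] by blast
  have "\<exists>G :: real \<Rightarrow> 'a set. G 0 = U \<and> G 1 = topspace N - T \<and>
               (\<forall>x \<in> dyadics \<inter> {0..1}. \<forall>y \<in> dyadics \<inter> {0..1}. x < y \<longrightarrow> R (G x) (G y))"
  proof (rule recursion_on_dyadic_fractions)
    show "R U (topspace N - T)" using U oV dV by (simp add: R_def)
    show "\<exists>z. R x z \<and> R z y" if "R x y" for x y
    proof -
      have "\<exists>W. openin N W \<and> decr N le W \<and> dn N le (N closure_of x) \<subseteq> W \<and> dn N le (N closure_of W) \<subseteq> y"
        using that unfolding R_def by (intro mono_sep_step[OF cN hN oN dn_closed dn_decr[OF closure_of_subset_topspace]]) auto
      then show ?thesis using that unfolding R_def by blast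
    qed
    show "R x z" if "R x y" "R y z" for x y z
    proof -
      have "x \<subseteq> N closure_of x" using that(1) unfolding R_def by (simp add: closure_of_subset openin_subset)
      have "N closure_of x \<subseteq> topspace N" by (rule closure_of_subset_topspace)
      have "y \<subseteq> N closure_of y" using that(2) unfolding R_def by (simp add: closure_of_subset openin_subset)
      moreover have "N closure_of y \<subseteq> dn N le (N closure_of y)" by (rule dn_sub[OF closure_of_subset_topspace])
      ultimately have "y \<subseteq> z" using that(2) unfolding R_def by blast
      then show ?thesis using that unfolding R_def by blast
    qed
  qed
  then obtain G :: "real \<Rightarrow> 'a set"
      where G0: "G 0 = U" and G1: "G 1 = topspace N - T"
        and GR: "\<And>x y. \<lbrakk>x \<in> dyadics; y \<in> dyadics; 0 \<le> x; x < y; y \<le> 1\<rbrakk> \<Longrightarrow> R (G x) (G y)"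
    by (smt (verit, del_insts) Int_iff atLeastAtMost_iff)
  have G: "\<And>x y::real. \<lbrakk>x \<in> dyadics; y \<in> dyadics; 0 \<le> x; x < y; y \<le> 1\<rbrakk>
                      \<Longrightarrow> openin N (G x) \<and> openin N (G y) \<and> N closure_of (G x) \<subseteq> G y"
  proof -
    fix x y :: real assume xy: "x \<in> dyadics" "y \<in> dyadics" "0 \<le> x" "x < y" "y \<le> 1"
    have r: "R (G x) (G y)" using GR[OF xy] .
    have "N closure_of (G x) \<subseteq> dn N le (N closure_of (G x))" by (rule dn_sub[OF closure_of_subset_topspace])
    then show "openin N (G x) \<and> openin N (G y) \<and> N closure_of (G x) \<subseteq> G y" using r unfolding R_def by blast
  qed
  have Gdec: "decr N le (G r)" if "r \<in> dyadics \<inter> {0..1}" for r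
  proof (cases "r = 1")
    case True then show ?thesis using dV G1 by simp
  next
    case False
    have 1: "1 \<in> dyadics" by (force simp: dyadics_def)
    show ?thesis using GR[OF _ 1, of r] that False unfolding R_def by auto
  qed
  have S_def': "S \<subseteq> U" by (rule U(3))
  have "S \<subseteq> topspace N" using cS closedin_subset by blast
  have "closedin N T" by (rule cT)
  have "openin N U" by (rule U(1))
  define f where "f \<equiv> \<lambda>x. Inf(insert 1 {r. r \<in> dyadics \<inter> {0..1} \<and> x \<in> G r})"
  have f_ge: "f x \<ge> 0" if "x \<in> topspace N" for x
    unfolding f_def by (force intro: cInf_greatest)
  moreover have f_le1: "f x \<le> 1" if "x \<in> topspace N" for x
  proof -
    have "bdd_below {r \<in> dyadics \<inter> {0..1}. x \<in> G r}"
      by (auto simp: bdd_below_def)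
    then show ?thesis
       by (auto simp: f_def cInf_lower)
  qed
  ultimately have fim: "f \<in> topspace N \<rightarrow> {0..1}"
    by (auto simp: f_def)
  have 0: "0 \<in> dyadics \<inter> {0..1::real}" and 1: "1 \<in> dyadics \<inter> {0..1::real}"
    by (force simp: dyadics_def)+
  then have opeG: "openin N (G r)" if "r \<in> dyadics \<inter> {0..1}" for r
    using G G0 \<open>openin N U\<close> less_eq_real_def that by auto
  have "x \<in> G 0" if "x \<in> S" for x
    using G0 \<open>S \<subseteq> U\<close> that by blast
  with 0 have fimS: "f ` S \<subseteq> {0}"
    unfolding f_def by (force intro!: cInf_eq_minimum)
  have False if "r \<in> dyadics" "0 \<le> r" "r < 1" "x \<in> G r" "x \<in> T" for r x
    using G [of r 1] 1
    by (smt (verit, best) DiffD2 G1 Int_iff closure_of_subset inf.orderE openin_subset that)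
  then have "r\<ge>1" if "r \<in> dyadics" "0 \<le> r" "r \<le> 1" "x \<in> G r" "x \<in> T" for r x
    using linorder_not_le that by blast
  then have fimT: "f ` T \<subseteq> {1}"
    unfolding f_def by (force intro!: cInf_eq_minimum)
  have fle1: "f z \<le> 1" for z
    by (force simp: f_def intro: cInf_lower)
  have fle: "f z \<le> x" if "x \<in> dyadics \<inter> {0..1}" "z \<in> G x" for z x
    using that by (force simp: f_def intro: cInf_lower)
  have *: "b \<le> f z" if "b \<le> 1" "\<And>x. \<lbrakk>x \<in> dyadics \<inter> {0..1}; z \<in> G x\<rbrakk> \<Longrightarrow> b \<le> x" for z b
    using that by (force simp: f_def intro: cInf_greatest)
  have **: "r \<le> f x" if r: "r \<in> dyadics \<inter> {0..1}" "x \<notin> G r" for r x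
  proof (rule *)
    show "r \<le> s" if "s \<in> dyadics \<inter> {0..1}" and "x \<in> G s" for s :: real
      using that r G [of s r] by (force simp: dest: closure_of_subset openin_subset)
  qed (use that in force)

  have "\<exists>U. openin N U \<and> x \<in> U \<and> (\<forall>y \<in> U. \<bar>f y - f x\<bar> < \<epsilon>)"
    if "x \<in> topspace N" and "0 < \<epsilon>" for x \<epsilon>
  proof -
    have A: "\<exists>r. r \<in> dyadics \<inter> {0..1} \<and> r < y \<and> \<bar>r - y\<bar> < d" if "0 < y" "y \<le> 1" "0 < d" for y d::real
    proof -
      obtain n q r 
        where "of_nat q / 2^n < y" "y < of_nat r / 2^n" "\<bar>q / 2^n - r / 2^n \<bar> < d"
        by (smt (verit, del_insts) padic_rational_approximation_straddle_pos  \<open>0 < d\<close> \<open>0 < y\<close>) 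
      then show ?thesis
        unfolding dyadics_def
        using divide_eq_0_iff that(2) by fastforce
    qed
    have B: "\<exists>r. r \<in> dyadics \<inter> {0..1} \<and> y < r \<and> \<bar>r - y\<bar> < d" if "0 \<le> y" "y < 1" "0 < d" for y d::real
    proof -
      obtain n q r 
        where "of_nat q / 2^n \<le> y" "y < of_nat r / 2^n" "\<bar>q / 2^n - r / 2^n \<bar> < d"
        using padic_rational_approximation_straddle_pos_le
        by (smt (verit, del_insts) \<open>0 < d\<close> \<open>0 \<le> y\<close>) 
      then show ?thesis
        apply (clarsimp simp: dyadics_def)
        using divide_eq_0_iff \<open>y < 1\<close>
        by (smt (verit) divide_nonneg_nonneg divide_self of_nat_0_le_iff of_nat_1 power_0 zero_le_power) 
    qed
    show ?thesis
    proof (cases "f x = 0")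
      case True
      with B[of 0] obtain r where r: "r \<in> dyadics \<inter> {0..1}" "0 < r" "\<bar>r\<bar> < \<epsilon>/2"
        by (smt (verit) \<open>0 < \<epsilon>\<close> half_gt_zero)
      show ?thesis
      proof (intro exI conjI)
        show "openin N (G r)"
          using opeG r(1) by blast
        show "x \<in> G r"
          using True ** r by force
        show "\<forall>y \<in> G r. \<bar>f y - f x\<bar> < \<epsilon>"
          using f_ge \<open>openin N (G r)\<close> fle openin_subset r by (fastforce simp: True)
      qed
    next
      case False
      show ?thesis 
      proof (cases "f x = 1")
        case True
        with A[of 1] obtain r where r: "r \<in> dyadics \<inter> {0..1}" "r < 1" "\<bar>r-1\<bar> < \<epsilon>/2"
          by (smt (verit) \<open>0 < \<epsilon>\<close> half_gt_zero)
        define G' where "G' \<equiv> topspace N - N closure_of G r"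
        show ?thesis
        proof (intro exI conjI)
          show "openin N G'"
            unfolding G'_def by fastforce
          obtain r' where "r' \<in> dyadics \<and> 0 \<le> r' \<and> r' \<le> 1 \<and> r < r' \<and> \<bar>r' - r\<bar> < 1 - r"
            using B r by force 
          moreover
          have "1 - r \<in> dyadics" "0 \<le> r"
            using 1 r dyadics_diff by force+
          ultimately have "x \<notin> N closure_of G r"
            using G True r fle by force
          then show "x \<in> G'"
            by (simp add: G'_def that)
          show "\<forall>y \<in> G'. \<bar>f y - f x\<bar> < \<epsilon>"
            using ** f_le1 in_closure_of r by (fastforce simp: True G'_def)
        qed
      next
        case False
        have "0 < f x" "f x < 1"
          using fle1 f_ge that(1) \<open>f x \<noteq> 0\<close> \<open>f x \<noteq> 1\<close> by (metis order_le_less) +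
        obtain r where r: "r \<in> dyadics \<inter> {0..1}" "r < f x" "\<bar>r - f x\<bar> < \<epsilon> / 2"
          using A \<open>0 < \<epsilon>\<close> \<open>0 < f x\<close> \<open>f x < 1\<close> by (smt (verit, best) half_gt_zero)
        obtain r' where r': "r' \<in> dyadics \<inter> {0..1}" "f x < r'" "\<bar>r' - f x\<bar> < \<epsilon> / 2"
          using B \<open>0 < \<epsilon>\<close> \<open>0 < f x\<close> \<open>f x < 1\<close> by (smt (verit, best) half_gt_zero)
        have "r < 1"
          using \<open>f x < 1\<close> r(2) by force
        show ?thesis
        proof (intro conjI exI)
          show "openin N (G r' - N closure_of G r)"
            using closedin_closure_of opeG r' by blast
          have "x \<in> N closure_of G r \<Longrightarrow> False"
            using B [of r "f x - r"] r \<open>r < 1\<close> G [of r] fle by force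
          then show "x \<in> G r' - N closure_of G r"
            using ** r' by fastforce
          show "\<forall>y\<in>G r' - N closure_of G r. \<bar>f y - f x\<bar> < \<epsilon>"
            using r r' ** G closure_of_subset field_sum_of_halves fle openin_subset subset_eq
            by (smt (verit) DiffE opeG)
        qed
      qed
    qed
  qed
  then have contf: "continuous_map N (top_of_set {0..1}) f"
    by (auto simp: Met_TC.continuous_map_to_metric dist_real_def continuous_map_in_subtopology fim abs_minus_commute simp flip: mtopology_is_euclidean)

  have fiso: "f x \<le> f y" if "x \<in> topspace N" "y \<in> topspace N" "le x y" for x y
  proof -
    have sub: "{r. r \<in> dyadics \<inter> {0..1} \<and> y \<in> G r} \<subseteq> {r. r \<in> dyadics \<inter> {0..1} \<and> x \<in> G r}"
      using Gdec that unfolding decr_def by blast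
    show ?thesis unfolding f_def
      by (rule cInf_superset_mono) (use sub in \<open>auto intro: bdd_belowI[of _ 0]\<close>)
  qed
  have "f q = 0" using fimS q refl by (auto simp: S_def dn_def)
  moreover have "f p = 1" using fimT p refl by (auto simp: T_def upc_def)
  moreover have "f \<in> cont_isotone_01 N le" using contf fiso by (simp add: cont_isotone_01_def)
  ultimately show ?thesis by blast
qed



lemma factor_through:
  fixes c1 :: "'a \<Rightarrow> 'b" and c2 :: "'a \<Rightarrow> 'c" and \<phi> :: "'i \<Rightarrow> 'b \<Rightarrow> real" and \<psi> :: "'i \<Rightarrow> 'c \<Rightarrow> real"
  assumes cY1: "compact_space Y1" and hY1: "Hausdorff_space Y1"
    and c1X: "c1 ` topspace X \<subseteq> topspace Y1"
    and c2X: "c2 ` topspace X \<subseteq> topspace Y2"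
    and dense2: "Y2 closure_of (c2 ` topspace X) = topspace Y2"
    and cphi: "\<And>i. i \<in> I \<Longrightarrow> continuous_map Y1 euclideanreal (\<phi> i)"
    and cpsi: "\<And>i. i \<in> I \<Longrightarrow> continuous_map Y2 euclideanreal (\<psi> i)"
    and agree: "\<And>i x. i \<in> I \<Longrightarrow> x \<in> topspace X \<Longrightarrow> \<phi> i (c1 x) = \<psi> i (c2 x)"
    and sep: "\<And>u v. u \<in> topspace Y1 \<Longrightarrow> v \<in> topspace Y1 \<Longrightarrow> u \<noteq> v \<Longrightarrow> \<exists>i\<in>I. \<phi> i u \<noteq> \<phi> i v"
  shows "\<exists>C. continuous_map Y2 Y1 C \<and> (\<forall>x\<in>topspace X. C (c2 x) = c1 x) \<and>
             (\<forall>i\<in>I. \<forall>y\<in>topspace Y2. \<phi> i (C y) = \<psi> i y)"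
proof -
  define P where "P = product_topology (\<lambda>i. euclideanreal) I"
  define e1 where "e1 = (\<lambda>y. restrict (\<lambda>i. \<phi> i y) I)"
  define e2 where "e2 = (\<lambda>y. restrict (\<lambda>i. \<psi> i y) I)"
  have ce1: "continuous_map Y1 P e1"
    unfolding P_def continuous_map_componentwise
  proof (intro conjI ballI)
    show "e1 ` topspace Y1 \<subseteq> extensional I" by (auto simp: e1_def)
    fix k assume k: "k \<in> I"
    show "continuous_map Y1 euclideanreal (\<lambda>x. e1 x k)"
      using cphi[OF k] k by (simp add: e1_def)
  qed
  have ce2: "continuous_map Y2 P e2"
    unfolding P_def continuous_map_componentwise
  proof (intro conjI ballI)
    show "e2 ` topspace Y2 \<subseteq> extensional I" by (auto simp: e2_def)
    fix k assume k: "k \<in> I"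
    show "continuous_map Y2 euclideanreal (\<lambda>x. e2 x k)"
      using cpsi[OF k] k by (simp add: e2_def)
  qed
  have hP: "Hausdorff_space P"
    unfolding P_def by (simp add: Hausdorff_space_product_topology)
  have inj: "inj_on e1 (topspace Y1)"
  proof (rule inj_onI)
    fix u v assume uv: "u \<in> topspace Y1" "v \<in> topspace Y1" "e1 u = e1 v"
    show "u = v"
    proof (rule ccontr)
      assume "u \<noteq> v"
      then obtain i where "i \<in> I" "\<phi> i u \<noteq> \<phi> i v" using sep uv by blast
      moreover have "e1 u i = e1 v i" using uv by simp
      ultimately show False by (simp add: e1_def)
    qed
  qed
  have cm: "closed_map Y1 P e1"
    using continuous_imp_closed_map_gen[OF cY1 Hausdorff_imp_kc_space[OF hP] ce1] .
  have K1: "closedin P (e1 ` topspace Y1)"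
    using cm by (simp add: closed_map_def)
  have e2sub: "e2 ` topspace Y2 \<subseteq> e1 ` topspace Y1"
  proof -
    have "e2 ` topspace Y2 = e2 ` (Y2 closure_of (c2 ` topspace X))" by (simp add: dense2)
    also have "\<dots> \<subseteq> P closure_of (e2 ` c2 ` topspace X)"
      by (rule continuous_map_image_closure_subset[OF ce2])
    also have "\<dots> \<subseteq> e1 ` topspace Y1"
    proof (rule closure_of_minimal[OF _ K1])
      show "e2 ` c2 ` topspace X \<subseteq> e1 ` topspace Y1"
      proof
        fix z assume "z \<in> e2 ` c2 ` topspace X"
        then obtain x where x: "x \<in> topspace X" "z = e2 (c2 x)" by blast
        have "e2 (c2 x) = e1 (c1 x)" using agree x(1) by (auto simp: e1_def e2_def)
        then show "z \<in> e1 ` topspace Y1" using x c1X by blast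
      qed
    qed
    finally show ?thesis .
  qed
  define C where "C = (\<lambda>y. inv_into (topspace Y1) e1 (e2 y))"
  have Cin: "C y \<in> topspace Y1" and eC: "e1 (C y) = e2 y" if "y \<in> topspace Y2" for y
  proof -
    have "e2 y \<in> e1 ` topspace Y1" using e2sub that by blast
    then show "C y \<in> topspace Y1" "e1 (C y) = e2 y" unfolding C_def by (auto intro: inv_into_into f_inv_into_f)
  qed
  have contC: "continuous_map Y2 Y1 C"
    unfolding continuous_map_closedin
  proof (intro conjI allI impI)
    show "C \<in> topspace Y2 \<rightarrow> topspace Y1" using Cin by blast
    fix K assume K: "closedin Y1 K"
    have Kt: "K \<subseteq> topspace Y1" using closedin_subset[OF K] .
    have "{y \<in> topspace Y2. C y \<in> K} = {y \<in> topspace Y2. e2 y \<in> e1 ` K}"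
    proof (intro Collect_cong conj_cong refl iffI)
      fix y assume y: "y \<in> topspace Y2"
      { assume "C y \<in> K" then show "e2 y \<in> e1 ` K" using eC[OF y] by force }
      { assume "e2 y \<in> e1 ` K"
        then obtain k where k: "k \<in> K" "e2 y = e1 k" by blast
        have "C y = k" using inj Cin[OF y] Kt k eC[OF y] by (metis inj_on_def subsetD)
        then show "C y \<in> K" using k by simp }
    qed
    moreover have "closedin P (e1 ` K)" using cm K by (simp add: closed_map_def)
    ultimately show "closedin Y2 {y \<in> topspace Y2. C y \<in> K}"
      using closedin_continuous_map_preimage[OF ce2] by simp
  qed
  have C2: "C (c2 x) = c1 x" if x: "x \<in> topspace X" for x
  proof -
    have y: "c2 x \<in> topspace Y2" using c2X x by blast
    have "e2 (c2 x) = e1 (c1 x)" using agree x by (auto simp: e1_def e2_def)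
    then have "e1 (C (c2 x)) = e1 (c1 x)" using eC[OF y] by simp
    then show ?thesis using inj Cin[OF y] c1X x by (metis image_subset_iff inj_on_def)
  qed
  have C3: "\<phi> i (C y) = \<psi> i y" if "i \<in> I" "y \<in> topspace Y2" for i y
  proof -
    have "e1 (C y) i = e2 y i" using eC[OF that(2)] by simp
    then show ?thesis using that(1) by (simp add: e1_def e2_def)
  qed
  show ?thesis using contC C2 C3 by blast
qed



lemma sep_fun:
  assumes "continuous_map Y euclideanreal h" "u \<in> topspace Y" "v \<in> topspace Y" "h u < h v"
  shows "\<exists>U V. openin Y U \<and> openin Y V \<and> u \<in> U \<and> v \<in> V \<and> (\<forall>x\<in>U. \<forall>y\<in>V. h x < h y)"
proof -
  define r where "r = (h u + h v) / 2"
  have "openin Y {x \<in> topspace Y. h x \<in> {..<r}}"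
    by (rule openin_continuous_map_preimage[OF assms(1)]) simp
  moreover have "openin Y {x \<in> topspace Y. h x \<in> {r<..}}"
    by (rule openin_continuous_map_preimage[OF assms(1)]) simp
  moreover have "u \<in> {x \<in> topspace Y. h x \<in> {..<r}}" "v \<in> {x \<in> topspace Y. h x \<in> {r<..}}"
    using assms by (auto simp: r_def)
  moreover have "\<forall>x\<in>{x \<in> topspace Y. h x \<in> {..<r}}. \<forall>y\<in>{x \<in> topspace Y. h x \<in> {r<..}}. h x < h y"
    by auto
  ultimately show ?thesis by blast
qed

lemma quotient_topology_open:
  "openin (quotient_topology X p) U \<longleftrightarrow> U \<subseteq> p ` topspace X \<and> openin X {x \<in> topspace X. p x \<in> U}"
proof -
  have "istopology (\<lambda>U. U \<subseteq> p ` topspace X \<and> openin X {x \<in> topspace X. p x \<in> U})"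
    unfolding istopology_def
  proof (rule conjI)
    show "\<forall>S T. S \<subseteq> p ` topspace X \<and> openin X {x \<in> topspace X. p x \<in> S} \<longrightarrow>
       T \<subseteq> p ` topspace X \<and> openin X {x \<in> topspace X. p x \<in> T} \<longrightarrow>
       S \<inter> T \<subseteq> p ` topspace X \<and> openin X {x \<in> topspace X. p x \<in> S \<inter> T}"
    proof (intro allI impI)
      fix S T assume "S \<subseteq> p ` topspace X \<and> openin X {x \<in> topspace X. p x \<in> S}"
        "T \<subseteq> p ` topspace X \<and> openin X {x \<in> topspace X. p x \<in> T}"
      moreover have "{x \<in> topspace X. p x \<in> S \<inter> T} = {x \<in> topspace X. p x \<in> S} \<inter> {x \<in> topspace X. p x \<in> T}" by auto
      ultimately show "S \<inter> T \<subseteq> p ` topspace X \<and> openin X {x \<in> topspace X. p x \<in> S \<inter> T}" by auto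
    qed
    show "\<forall>K. (\<forall>S\<in>K. S \<subseteq> p ` topspace X \<and> openin X {x \<in> topspace X. p x \<in> S}) \<longrightarrow>
       \<Union>K \<subseteq> p ` topspace X \<and> openin X {x \<in> topspace X. p x \<in> \<Union>K}"
    proof (intro allI impI)
      fix K assume K: "\<forall>S\<in>K. S \<subseteq> p ` topspace X \<and> openin X {x \<in> topspace X. p x \<in> S}"
      have "{x \<in> topspace X. p x \<in> \<Union>K} = (\<Union>S\<in>K. {x \<in> topspace X. p x \<in> S})" by auto
      then show "\<Union>K \<subseteq> p ` topspace X \<and> openin X {x \<in> topspace X. p x \<in> \<Union>K}"
        using K by auto
    qed
  qed
  then show ?thesis unfolding quotient_topology_def by (simp add: topology_inverse')
qed

lemma topspace_quotient_topology: "topspace (quotient_topology X p) = p ` topspace X"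
proof -
  have "{x \<in> topspace X. p x \<in> p ` topspace X} = topspace X" by auto
  then have "openin (quotient_topology X p) (p ` topspace X)"
    by (simp add: quotient_topology_open)
  then show ?thesis
    by (metis openin_subset quotient_topology_open subset_antisym openin_topspace)
qed

lemma quotient_map_quotient_topology: "quotient_map X (quotient_topology X p) p"
  unfolding quotient_map_def topspace_quotient_topology quotient_topology_open by auto

locale setup10 =
  fixes X :: "'a topology" and le :: "'a \<Rightarrow> 'a \<Rightarrow> bool"
    and bt :: "'a \<Rightarrow> 'b" and B :: "'b topology"
    and n :: "'a \<Rightarrow> 'c" and N :: "'c topology" and leN :: "'c \<Rightarrow> 'c \<Rightarrow> bool"
  assumes cro: "completely_regularly_ordered X le"
    and sc: "Stone_Cech_compactification X bt B"
    and nach: "Nachbin_compactification X le n N leN"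
begin

abbreviation "F \<equiv> cont_isotone_01 X le"
definition "gt f = (SOME g. continuous_map B (top_of_set {0..1::real}) g \<and> (\<forall>e\<in>topspace X. g (bt e) = f e))"
abbreviation "cls \<equiv> beta_class X le bt B"
abbreviation "Q \<equiv> quotient_topology B cls"
definition "rep P = (SOME a. a \<in> topspace B \<and> cls a = P)"
definition "hat f P = gt f (rep P)"
abbreviation "qle \<equiv> beta_quot_le X le bt B"
abbreviation "c \<equiv> cls \<circ> bt"

lemma ordX: "order_on (topspace X) le"
  using cro by (simp add: completely_regularly_ordered_def)

lemma leX: "x \<in> topspace X \<Longrightarrow> y \<in> topspace X \<Longrightarrow> le x y \<longleftrightarrow> (\<forall>f\<in>F. f x \<le> f y)"
  using cro by (simp add: completely_regularly_ordered_def)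

lemma cB: "compact_space B" and hB: "Hausdorff_space B" and embB: "embedding_map X B bt"
  and denseB: "B closure_of (bt ` topspace X) = topspace B"
  using sc by (auto simp: Stone_Cech_compactification_def)

lemma contbt: "continuous_map X B bt"
  using embB unfolding embedding_map_def using homeomorphic_imp_continuous_map continuous_map_in_subtopology by blast

lemma btX: "bt ` topspace X \<subseteq> topspace B"
  using contbt continuous_map_image_subset_topspace by blast

lemma F_cont: "f \<in> F \<Longrightarrow> continuous_map X (top_of_set {0..1}) f"
  by (simp add: cont_isotone_01_def)

lemma gt: assumes "f \<in> F"
  shows "continuous_map B (top_of_set {0..1::real}) (gt f)" "\<And>e. e \<in> topspace X \<Longrightarrow> gt f (bt e) = f e"
proof -
  have "\<exists>g. continuous_map B (top_of_set {0..1::real}) g \<and> (\<forall>e\<in>topspace X. g (bt e) = f e)"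
    using sc F_cont[OF assms] by (simp add: Stone_Cech_compactification_def)
  then have "continuous_map B (top_of_set {0..1::real}) (gt f) \<and> (\<forall>e\<in>topspace X. gt f (bt e) = f e)"
    unfolding gt_def by (rule someI_ex)
  then show "continuous_map B (top_of_set {0..1::real}) (gt f)" "\<And>e. e \<in> topspace X \<Longrightarrow> gt f (bt e) = f e"
    by auto
qed

lemma gt_R: "f \<in> F \<Longrightarrow> continuous_map B euclideanreal (gt f)"
  using gt(1) continuous_map_in_subtopology by blast

lemma H01: "Hausdorff_space (top_of_set {0..1::real})"
  by (simp add: Hausdorff_space_subtopology)

lemma gt_unique:
  assumes "f \<in> F" "continuous_map B (top_of_set {0..1::real}) g" "\<And>e. e \<in> topspace X \<Longrightarrow> g (bt e) = f e"
    "a \<in> topspace B"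
  shows "g a = gt f a"
proof (rule forall_in_closure_of_eq[OF _ H01 assms(2) gt(1)[OF assms(1)]])
  show "a \<in> B closure_of (bt ` topspace X)" using assms(4) denseB by simp
  fix x assume "x \<in> bt ` topspace X"
  then show "g x = gt f x" using assms(3) gt(2)[OF assms(1)] by auto
qed

lemma BL: "beta_le X le bt B a b \<longleftrightarrow> a \<in> topspace B \<and> b \<in> topspace B \<and> (\<forall>f\<in>F. gt f a \<le> gt f b)"
proof
  assume L: "beta_le X le bt B a b"
  then have ab: "a \<in> topspace B" "b \<in> topspace B" by (auto simp: beta_le_def)
  have "gt f a \<le> gt f b" if "f \<in> F" for f
    using L that gt[OF that] unfolding beta_le_def by blast
  then show "a \<in> topspace B \<and> b \<in> topspace B \<and> (\<forall>f\<in>F. gt f a \<le> gt f b)" using ab by blast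
next
  assume R: "a \<in> topspace B \<and> b \<in> topspace B \<and> (\<forall>f\<in>F. gt f a \<le> gt f b)"
  show "beta_le X le bt B a b"
    unfolding beta_le_def
  proof (intro conjI ballI allI impI)
    fix f g assume f: "f \<in> F" and g: "continuous_map B (top_of_set {0..1::real}) g \<and> (\<forall>e\<in>topspace X. g (bt e) = f e)"
    have "g a = gt f a" "g b = gt f b" using gt_unique[OF f] g R by auto
    then show "g a \<le> g b" using R f by simp
  qed (use R in auto)
qed

lemma cls_mem: "a \<in> topspace B \<Longrightarrow> a \<in> cls a"
  by (simp add: beta_class_def BL)

lemma cls_eq: assumes "a \<in> topspace B" "b \<in> topspace B"
  shows "cls a = cls b \<longleftrightarrow> (\<forall>f\<in>F. gt f a = gt f b)"
proof
  assume "cls a = cls b"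
  then have "b \<in> cls a" using cls_mem[OF assms(2)] by simp
  then show "\<forall>f\<in>F. gt f a = gt f b" by (auto simp: beta_class_def BL intro: antisym)
next
  assume "\<forall>f\<in>F. gt f a = gt f b"
  then show "cls a = cls b" using assms by (auto simp: beta_class_def BL)
qed

lemma qmap: "quotient_map B Q cls"
  by (rule quotient_map_quotient_topology)

lemma tsQ: "topspace Q = cls ` topspace B"
  by (rule topspace_quotient_topology)

lemma hat_cls: assumes "a \<in> topspace B" "f \<in> F" shows "hat f (cls a) = gt f a"
proof -
  have "\<exists>x. x \<in> topspace B \<and> cls x = cls a" using assms by blast
  then have r: "rep (cls a) \<in> topspace B" "cls (rep (cls a)) = cls a"
    unfolding rep_def by (metis (mono_tags, lifting) someI_ex)+
  then show ?thesis using cls_eq[OF r(1) assms(1)] assms(2) by (simp add: hat_def)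
qed

lemma hat_cont: assumes "f \<in> F" shows "continuous_map Q (top_of_set {0..1}) (hat f)"
proof (rule continuous_compose_quotient_map[OF qmap])
  show "continuous_map B (top_of_set {0..1}) (hat f \<circ> cls)"
    by (rule continuous_map_eq[OF gt(1)[OF assms]]) (simp add: hat_cls assms)
qed

lemma hat_R: "f \<in> F \<Longrightarrow> continuous_map Q euclideanreal (hat f)"
  using hat_cont continuous_map_in_subtopology by blast

lemma Q_eq: assumes "P \<in> topspace Q" "R \<in> topspace Q" "\<forall>f\<in>F. hat f P = hat f R" shows "P = R"
proof -
  obtain a b where ab: "a \<in> topspace B" "b \<in> topspace B" "P = cls a" "R = cls b" using assms tsQ by auto
  then show ?thesis using assms(3) cls_eq[OF ab(1,2)] hat_cls by auto
qed

lemma QL: "qle P R \<longleftrightarrow> P \<in> topspace Q \<and> R \<in> topspace Q \<and> (\<forall>f\<in>F. hat f P \<le> hat f R)"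
proof
  assume "qle P R"
  then obtain x y where xy: "x \<in> topspace B" "y \<in> topspace B" "P = cls x" "R = cls y" "beta_le X le bt B x y"
    by (auto simp: beta_quot_le_def)
  then show "P \<in> topspace Q \<and> R \<in> topspace Q \<and> (\<forall>f\<in>F. hat f P \<le> hat f R)"
    using tsQ hat_cls BL by auto
next
  assume R: "P \<in> topspace Q \<and> R \<in> topspace Q \<and> (\<forall>f\<in>F. hat f P \<le> hat f R)"
  then obtain x y where xy: "x \<in> topspace B" "y \<in> topspace B" "P = cls x" "R = cls y" using tsQ by auto
  then have "beta_le X le bt B x y" using R hat_cls BL by auto
  then show "qle P R" using xy by (auto simp: beta_quot_le_def)
qed

lemma c_in: "x \<in> topspace X \<Longrightarrow> c x \<in> topspace Q"
  using btX tsQ by auto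

lemma hat_c: "x \<in> topspace X \<Longrightarrow> f \<in> F \<Longrightarrow> hat f (c x) = f x"
  using btX hat_cls gt(2) by auto


lemma cQ: "compact_space Q"
proof -
  have "compactin Q (cls ` topspace B)"
    using image_compactin[OF cB[unfolded compact_space_def] quotient_imp_continuous_map[OF qmap]] .
  then show ?thesis by (simp add: compact_space_def tsQ)
qed

lemma Q_sep: assumes "P \<in> topspace Q" "R \<in> topspace Q" "\<not> qle P R"
  shows "\<exists>f\<in>F. hat f R < hat f P"
  using assms QL by force

lemma hQ: "Hausdorff_space Q"
  unfolding Hausdorff_space_def
proof (intro allI impI)
  fix P R assume PR: "P \<in> topspace Q \<and> R \<in> topspace Q \<and> P \<noteq> R"
  have "\<not> (\<forall>f\<in>F. hat f P = hat f R)" using Q_eq PR by metis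
  then obtain f where f: "f \<in> F" "hat f P \<noteq> hat f R" by blast
  show "\<exists>U V. openin Q U \<and> openin Q V \<and> P \<in> U \<and> R \<in> V \<and> disjnt U V"
  proof (cases "hat f P < hat f R")
    case True
    have "P \<in> topspace Q" "R \<in> topspace Q" using PR by auto
    then obtain U V where "openin Q U" "openin Q V" "P \<in> U" "R \<in> V" "\<forall>x\<in>U. \<forall>y\<in>V. hat f x < hat f y"
      using sep_fun[OF hat_R[OF f(1)] _ _ True] by blast
    then show ?thesis by (auto simp: disjnt_def)
  next
    case False
    then have lt: "hat f R < hat f P" using f by simp
    have "P \<in> topspace Q" "R \<in> topspace Q" using PR by auto
    then obtain U V where "openin Q U" "openin Q V" "R \<in> U" "P \<in> V" "\<forall>x\<in>U. \<forall>y\<in>V. hat f x < hat f y"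
      using sep_fun[OF hat_R[OF f(1)] _ _ lt] by blast
    then show ?thesis by (auto simp: disjnt_def)
  qed
qed

lemma T2Q: "T2_ordered Q qle"
  unfolding T2_ordered_def
proof
  show "order_on (topspace Q) qle"
    unfolding order_on_def
  proof (intro conjI ballI impI)
    fix x assume "x \<in> topspace Q" then show "qle x x" by (simp add: QL)
  next
    fix x y assume "x \<in> topspace Q" "y \<in> topspace Q" "qle x y \<and> qle y x"
    then have "\<forall>f\<in>F. hat f x = hat f y" using QL by (simp add: order_antisym)
    then show "x = y" using Q_eq \<open>x \<in> topspace Q\<close> \<open>y \<in> topspace Q\<close> by blast
  next
    fix x y z assume "x \<in> topspace Q" "y \<in> topspace Q" "z \<in> topspace Q" "qle x y \<and> qle y z"
    then have "\<forall>f\<in>F. hat f x \<le> hat f y" "\<forall>f\<in>F. hat f y \<le> hat f z" using QL by simp_all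
    then have "\<forall>f\<in>F. hat f x \<le> hat f z" by (fastforce intro: order_trans)
    then show "qle x z" using QL \<open>x \<in> topspace Q\<close> \<open>z \<in> topspace Q\<close> by simp
  qed
  define G where "G = {(x, y). x \<in> topspace Q \<and> y \<in> topspace Q \<and> qle x y}"
  have "openin (prod_topology Q Q) (topspace (prod_topology Q Q) - G)"
  proof (subst openin_subopen, intro ballI)
    fix z assume z: "z \<in> topspace (prod_topology Q Q) - G"
    obtain P R where PR: "z = (P, R)" "P \<in> topspace Q" "R \<in> topspace Q" "\<not> qle P R"
      using z by (cases z) (auto simp: G_def)
    obtain f where f: "f \<in> F" "hat f R < hat f P" using Q_sep[OF PR(2,3,4)] by blast
    obtain U V where UV: "openin Q U" "openin Q V" "R \<in> U" "P \<in> V" "\<forall>x\<in>U. \<forall>y\<in>V. hat f x < hat f y"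
      using sep_fun[OF hat_R[OF f(1)] PR(3,2) f(2)] by blast
    have "openin (prod_topology Q Q) (V \<times> U)" using UV by (simp add: openin_prod_Times_iff)
    moreover have "z \<in> V \<times> U" using PR UV by simp
    moreover have "V \<times> U \<subseteq> topspace (prod_topology Q Q) - G"
    proof
      fix w assume w: "w \<in> V \<times> U"
      then obtain x y where xy: "w = (x, y)" "x \<in> V" "y \<in> U" by blast
      have "hat f y < hat f x" using UV(5) xy by blast
      then have "\<not> qle x y" using f(1) QL by fastforce
      moreover have "x \<in> topspace Q" "y \<in> topspace Q" using xy UV openin_subset by blast+
      ultimately show "w \<in> topspace (prod_topology Q Q) - G" using xy by (auto simp: G_def)
    qed
    ultimately show "\<exists>T. openin (prod_topology Q Q) T \<and> z \<in> T \<and> T \<subseteq> topspace (prod_topology Q Q) - G"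
      by blast
  qed
  moreover have "G \<subseteq> topspace (prod_topology Q Q)" by (auto simp: G_def)
  ultimately have "closedin (prod_topology Q Q) G" by (simp add: closedin_def)
  then show "closedin (prod_topology Q Q) {(x, y). x \<in> topspace Q \<and> y \<in> topspace Q \<and> qle x y}"
    by (simp add: G_def)
qed

lemma denseQ: "Q closure_of (c ` topspace X) = topspace Q"
proof
  show "Q closure_of (c ` topspace X) \<subseteq> topspace Q" by (rule closure_of_subset_topspace)
  have "topspace Q = cls ` (B closure_of (bt ` topspace X))" by (simp add: tsQ denseB)
  also have "\<dots> \<subseteq> Q closure_of (cls ` bt ` topspace X)"
    by (rule continuous_map_image_closure_subset[OF quotient_imp_continuous_map[OF qmap]])
  also have "\<dots> = Q closure_of (c ` topspace X)" by (simp add: image_comp)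
  finally show "topspace Q \<subseteq> Q closure_of (c ` topspace X)" .
qed

lemma ordQ: "x \<in> topspace X \<Longrightarrow> y \<in> topspace X \<Longrightarrow> le x y \<longleftrightarrow> qle (c x) (c y)"
  using leX QL c_in hat_c by simp


definition "SS = {{x \<in> topspace X. f x \<in> U} | f U. f \<in> F \<and> open U}"

lemma XG: "X = topology_generated_by SS"
  using cro unfolding completely_regularly_ordered_def SS_def by blast

lemma loc_gen:
  assumes "generate_topology_on SS W"
  shows "\<forall>x\<in>W \<inter> topspace X. \<exists>V. openin Q V \<and> c x \<in> V \<and> (\<forall>y\<in>topspace X. c y \<in> V \<longrightarrow> y \<in> W)"
  using assms
proof (induction rule: generate_topology_on.induct)
  case Empty
  then show ?case by simp
next
  case (Int a b)
  show ?case
  proof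
    fix x assume x: "x \<in> a \<inter> b \<inter> topspace X"
    obtain V1 where V1: "openin Q V1" "c x \<in> V1" "\<forall>y\<in>topspace X. c y \<in> V1 \<longrightarrow> y \<in> a" using Int.IH(1) x by blast
    obtain V2 where V2: "openin Q V2" "c x \<in> V2" "\<forall>y\<in>topspace X. c y \<in> V2 \<longrightarrow> y \<in> b" using Int.IH(2) x by blast
    show "\<exists>V. openin Q V \<and> c x \<in> V \<and> (\<forall>y\<in>topspace X. c y \<in> V \<longrightarrow> y \<in> a \<inter> b)"
      by (rule exI[of _ "V1 \<inter> V2"]) (use V1 V2 in auto)
  qed
next
  case (UN K)
  show ?case
  proof
    fix x assume x: "x \<in> \<Union>K \<inter> topspace X"
    then obtain k where k: "k \<in> K" "x \<in> k" by blast
    then obtain V where V: "openin Q V" "c x \<in> V" "\<forall>y\<in>topspace X. c y \<in> V \<longrightarrow> y \<in> k" using UN.IH x by blast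
    show "\<exists>V. openin Q V \<and> c x \<in> V \<and> (\<forall>y\<in>topspace X. c y \<in> V \<longrightarrow> y \<in> \<Union>K)"
      using V k by blast
  qed
next
  case (Basis s)
  then obtain f U where fU: "s = {x \<in> topspace X. f x \<in> U}" "f \<in> F" "open U" by (auto simp: SS_def)
  show ?case
  proof
    fix x assume x: "x \<in> s \<inter> topspace X"
    define V where "V = {P \<in> topspace Q. hat f P \<in> U}"
    have "openin Q V" unfolding V_def using openin_continuous_map_preimage[OF hat_R[OF fU(2)]] fU(3) by simp
    moreover have "c x \<in> V" using x fU c_in hat_c by (auto simp: V_def)
    moreover have "\<forall>y\<in>topspace X. c y \<in> V \<longrightarrow> y \<in> s" using fU hat_c by (auto simp: V_def)
    ultimately show "\<exists>V. openin Q V \<and> c x \<in> V \<and> (\<forall>y\<in>topspace X. c y \<in> V \<longrightarrow> y \<in> s)" by blast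
  qed
qed

lemma inj_c: "inj_on c (topspace X)"
proof (rule inj_onI)
  fix x y assume xy: "x \<in> topspace X" "y \<in> topspace X" "c x = c y"
  have "\<forall>f\<in>F. f x = f y" using hat_c xy by metis
  then have "le x y" "le y x" using leX xy by auto
  then show "x = y" using ordX xy unfolding order_on_def by blast
qed

lemma contc: "continuous_map X Q c"
  by (rule continuous_map_compose[OF contbt quotient_imp_continuous_map[OF qmap]])

lemma embQ: "embedding_map X Q c"
  unfolding embedding_map_def
proof (rule bijective_open_imp_homeomorphic_map)
  show "continuous_map X (subtopology Q (c ` topspace X)) c"
    using contc by (simp add: continuous_map_in_subtopology)
  show "c ` topspace X = topspace (subtopology Q (c ` topspace X))"
    using c_in by auto
  show "inj_on c (topspace X)" by (rule inj_c)
  show "open_map X (subtopology Q (c ` topspace X)) c"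
    unfolding open_map_def
  proof (intro allI impI)
    fix W assume W: "openin X W"
    have "openin (topology_generated_by SS) W" using W by (subst XG[symmetric])
    then have g: "generate_topology_on SS W" by (simp add: openin_topology_generated_by_iff)
    have Wt: "W \<subseteq> topspace X" using openin_subset[OF W] .
    show "openin (subtopology Q (c ` topspace X)) (c ` W)"
    proof (subst openin_subopen, intro ballI)
      fix z assume "z \<in> c ` W"
      then obtain x where x: "x \<in> W" "z = c x" by blast
      obtain V where V: "openin Q V" "c x \<in> V" "\<forall>y\<in>topspace X. c y \<in> V \<longrightarrow> y \<in> W"
        using loc_gen[OF g] x Wt by blast
      have "openin (subtopology Q (c ` topspace X)) (V \<inter> c ` topspace X)"
        using V(1) by (simp add: openin_subtopology_Int)
      moreover have "z \<in> V \<inter> c ` topspace X" using x V Wt by auto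
      moreover have "V \<inter> c ` topspace X \<subseteq> c ` W" using V(3) by auto
      ultimately show "\<exists>T. openin (subtopology Q (c ` topspace X)) T \<and> z \<in> T \<and> T \<subseteq> c ` W" by blast
    qed
  qed
qed


lemma T2N: "T2_order_compactification X le n N leN"
  and extN: "\<And>f. f \<in> F \<Longrightarrow> \<exists>g\<in>cont_isotone_01 N leN. \<forall>x\<in>topspace X. g (n x) = f x"
  using nach by (auto simp: Nachbin_compactification_def)

lemma cN: "compact_space N" and hN: "Hausdorff_space N" and oN: "T2_ordered N leN"
  and embN: "embedding_map X N n" and denseN: "N closure_of (n ` topspace X) = topspace N"
  and ordN: "\<And>x y. x \<in> topspace X \<Longrightarrow> y \<in> topspace X \<Longrightarrow> le x y \<longleftrightarrow> leN (n x) (n y)"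
  using T2N by (auto simp: T2_order_compactification_def)

lemma contn: "continuous_map X N n"
  using embN unfolding embedding_map_def using homeomorphic_imp_continuous_map continuous_map_in_subtopology by blast

lemma nX: "n ` topspace X \<subseteq> topspace N"
  using contn continuous_map_image_subset_topspace by blast

definition "hn f = (SOME g. g \<in> cont_isotone_01 N leN \<and> (\<forall>x\<in>topspace X. g (n x) = f x))"

lemma hn: assumes "f \<in> F" shows "hn f \<in> cont_isotone_01 N leN" "\<And>x. x \<in> topspace X \<Longrightarrow> hn f (n x) = f x"
proof -
  have "\<exists>g. g \<in> cont_isotone_01 N leN \<and> (\<forall>x\<in>topspace X. g (n x) = f x)" using extN[OF assms] by blast
  then have "hn f \<in> cont_isotone_01 N leN \<and> (\<forall>x\<in>topspace X. hn f (n x) = f x)"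
    unfolding hn_def by (rule someI_ex)
  then show "hn f \<in> cont_isotone_01 N leN" "\<And>x. x \<in> topspace X \<Longrightarrow> hn f (n x) = f x" by auto
qed

lemma hn_R: "f \<in> F \<Longrightarrow> continuous_map N euclideanreal (hn f)"
  using hn(1) continuous_map_in_subtopology unfolding cont_isotone_01_def by blast

lemma phi_comp: assumes phi: "\<phi> \<in> cont_isotone_01 N leN"
  shows "\<phi> \<circ> n \<in> F" "\<And>u. u \<in> topspace N \<Longrightarrow> hn (\<phi> \<circ> n) u = \<phi> u"
proof -
  have cphi: "continuous_map N (top_of_set {0..1}) \<phi>" using phi by (simp add: cont_isotone_01_def)
  show F: "\<phi> \<circ> n \<in> F"
    unfolding cont_isotone_01_def
  proof (intro CollectI conjI ballI impI)
    show "continuous_map X (top_of_set {0..1}) (\<phi> \<circ> n)" by (rule continuous_map_compose[OF contn cphi])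
    fix x y assume xy: "x \<in> topspace X" "y \<in> topspace X" "le x y"
    then have "leN (n x) (n y)" "n x \<in> topspace N" "n y \<in> topspace N" using ordN nX by auto
    then show "(\<phi> \<circ> n) x \<le> (\<phi> \<circ> n) y" using phi by (auto simp: cont_isotone_01_def)
  qed
  fix u assume u: "u \<in> topspace N"
  have hc: "continuous_map N (top_of_set {0..1}) (hn (\<phi> \<circ> n))" using hn(1)[OF F] by (simp add: cont_isotone_01_def)
  show "hn (\<phi> \<circ> n) u = \<phi> u"
  proof (rule forall_in_closure_of_eq[OF _ H01 hc cphi])
    show "u \<in> N closure_of (n ` topspace X)" using u denseN by simp
    fix z assume "z \<in> n ` topspace X"
    then show "hn (\<phi> \<circ> n) z = \<phi> z" using hn(2)[OF F] by auto
  qed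
qed

lemma N_sep: assumes "u \<in> topspace N" "v \<in> topspace N" "\<not> leN u v"
  shows "\<exists>f\<in>F. hn f v < hn f u"
proof -
  obtain \<phi> where phi: "\<phi> \<in> cont_isotone_01 N leN" "\<phi> v = 0" "\<phi> u = 1"
    using ordered_Urysohn[OF cN hN oN assms] by blast
  show ?thesis using phi_comp[OF phi(1)] phi assms by (intro bexI[of _ "\<phi> \<circ> n"]) auto
qed

lemma le1: "compactification_le X c Q qle n N leN"
proof -
  have "\<exists>C. continuous_map N Q C \<and> (\<forall>x\<in>topspace X. C (n x) = c x) \<and>
             (\<forall>i\<in>F. \<forall>y\<in>topspace N. hat i (C y) = hn i y)"
  proof (rule factor_through[OF cQ hQ _ nX denseN hat_R hn_R])
    show "c ` topspace X \<subseteq> topspace Q" using c_in by blast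
    show "hat i (c x) = hn i (n x)" if "i \<in> F" "x \<in> topspace X" for i x
      using that hat_c hn(2) by simp
    show "\<exists>i\<in>F. hat i u \<noteq> hat i v" if "u \<in> topspace Q" "v \<in> topspace Q" "u \<noteq> v" for u v
      using Q_eq that by blast
  qed
  then obtain C where C: "continuous_map N Q C" "\<forall>x\<in>topspace X. C (n x) = c x"
    "\<forall>i\<in>F. \<forall>y\<in>topspace N. hat i (C y) = hn i y" by blast
  have "qle (C u) (C v)" if "u \<in> topspace N" "v \<in> topspace N" "leN u v" for u v
  proof -
    have "C u \<in> topspace Q" "C v \<in> topspace Q" using C(1) that continuous_map_image_subset_topspace by blast+
    moreover have "\<forall>f\<in>F. hat f (C u) \<le> hat f (C v)"
      using C(3) that hn(1) by (auto simp: cont_isotone_01_def)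
    ultimately show ?thesis using QL by simp
  qed
  then show ?thesis unfolding compactification_le_def using C by blast
qed

lemma le2: "compactification_le X n N leN c Q qle"
proof -
  have "\<exists>D. continuous_map Q N D \<and> (\<forall>x\<in>topspace X. D (c x) = n x) \<and>
             (\<forall>i\<in>F. \<forall>y\<in>topspace Q. hn i (D y) = hat i y)"
  proof (rule factor_through[OF cN hN nX _ denseQ hn_R hat_R])
    show "c ` topspace X \<subseteq> topspace Q" using c_in by blast
    show "hn i (n x) = hat i (c x)" if "i \<in> F" "x \<in> topspace X" for i x
      using that hat_c hn(2) by simp
    show "\<exists>i\<in>F. hn i u \<noteq> hn i v" if uv: "u \<in> topspace N" "v \<in> topspace N" "u \<noteq> v" for u v
    proof (cases "leN u v")
      case True
      then have "\<not> leN v u" using oN uv unfolding T2_ordered_def order_on_def by blast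
      then show ?thesis using N_sep[OF uv(2,1)] by force
    next
      case False
      then show ?thesis using N_sep[OF uv(1,2)] by force
    qed
  qed
  then obtain D where D: "continuous_map Q N D" "\<forall>x\<in>topspace X. D (c x) = n x"
    "\<forall>i\<in>F. \<forall>y\<in>topspace Q. hn i (D y) = hat i y" by blast
  have "leN (D u) (D v)" if "u \<in> topspace Q" "v \<in> topspace Q" "qle u v" for u v
  proof (rule ccontr)
    assume nl: "\<not> leN (D u) (D v)"
    have "D u \<in> topspace N" "D v \<in> topspace N" using D(1) that continuous_map_image_subset_topspace by blast+
    then obtain f where f: "f \<in> F" "hn f (D v) < hn f (D u)" using N_sep nl by blast
    then have "hat f v < hat f u" using D(3) that by simp
    moreover have "hat f u \<le> hat f v" using that(3) QL f(1) by simp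
    ultimately show False by simp
  qed
  then show ?thesis unfolding compactification_le_def using D by blast
qed

lemma final:
  "T2_order_compactification X le c Q qle \<and> compactification_equiv X c Q qle n N leN"
  unfolding T2_order_compactification_def compactification_equiv_def
  using cQ hQ T2Q embQ denseQ ordQ le1 le2 by blast

end

theorem mainTheorem10:
  fixes X :: "'a topology" and le :: "'a \<Rightarrow> 'a \<Rightarrow> bool"
    and bt :: "'a \<Rightarrow> 'b" and B :: "'b topology"
    and n :: "'a \<Rightarrow> 'c" and N :: "'c topology" and leN :: "'c \<Rightarrow> 'c \<Rightarrow> bool"
  assumes "completely_regularly_ordered X le"
    and "Stone_Cech_compactification X bt B"
    and "Nachbin_compactification X le n N leN"
  shows "T2_order_compactification X le (beta_class X le bt B \<circ> bt)
           (quotient_topology B (beta_class X le bt B)) (beta_quot_le X le bt B)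
       \<and> compactification_equiv X (beta_class X le bt B \<circ> bt)
           (quotient_topology B (beta_class X le bt B)) (beta_quot_le X le bt B) n N leN"
proof -
  interpret setup10 X le bt B n N leN using assms by unfold_locales
  show ?thesis by (rule final)
qed

end
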